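(* Let $\Gamma$ be a $C^2$ curve with arc-length parametrization $\boldsymbol X(s)$ satisfying $\boldsymbol X(0)=\boldsymbol 0$ and $\partial_s\boldsymbol X(0)=(1,0)^T$, with unit normal field $\boldsymbol n$, and fix $\lambda\ge0$. For $R>0$ let $\mathcal O$ be the disc of radius $R$ centered at $\boldsymbol 0$ and choose collocation points $\boldsymbol q^{(1)}_k=\boldsymbol X(\eta^{(1)}_kR)$, $k=1,2,3$, with $\eta^{(1)}_k$ distinct; $\boldsymbol q^{(2)}_k=\boldsymbol X(\eta^{(2)}_kR)$, $k=1,2$, with $\eta^{(2)}_1\neq\eta^{(2)}_2$; $\boldsymbol q^{(3)}=\boldsymbol X(\eta^{(3)}R)$; and $\boldsymbol q^{(4)}_k=R\boldsymbol\xi_k$, $k=1,2,3$, with $\boldsymbol\xi_1,\boldsymbol\xi_2,\boldsymbol\xi_3$ non-collinear, where all constants $\eta^{(d)}_k,\boldsymbol\xi_k$ are independent of $R$ and all points lie in $\mathcal O$. Then there exists $R_0>0$ such that for all $R\le R_0$ the $15\times15$ collocation matrix $\boldsymbol M=\boldsymbol M(R)$ defined in the context is invertible and $\|\boldsymbol M^{-1}\|_\infty$ is bounded uniformly in $R\in(0,R_0]$.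
   Context: Let $\phi_1=1,\phi_2=x,\phi_3=y,\phi_4=x^2,\phi_5=y^2,\phi_6=xy$. Unknowns are $\boldsymbol c_1,\dots,\boldsymbol c_6\in\mathbb R^2$ (components $c_j^{(1)},c_j^{(2)}$) and $d_1,d_2,d_3\in\mathbb R$, i.e. a vector in $\mathbb R^{15}$, representing $\hat{\boldsymbol v}(\boldsymbol x)=\sum_{j=1}^6\boldsymbol c_j\phi_j(\boldsymbol x/R)$, $\hat q(\boldsymbol x)=\sum_{j=1}^3\frac{d_j}{R}\phi_j(\boldsymbol x/R)$. The matrix $\boldsymbol M$ is the matrix of the linear map sending the unknowns to the 15 quantities: (i) for $k=1,2,3$: $\sum_{j=1}^6\phi_j(\boldsymbol q^{(1)}_k/R)\boldsymbol c_j\in\mathbb R^2$; (ii) for $k=1,2$: $\sum_{j=1}^6\big(\boldsymbol c_j\nabla\phi_j^T+\nabla\phi_j\boldsymbol c_j^T\big)(\boldsymbol q^{(2)}_k/R)\,\boldsymbol n(\boldsymbol q^{(2)}_k)-\sum_{j=1}^3d_j\phi_j(\boldsymbol q^{(2)}_k/R)\boldsymbol n(\boldsymbol q^{(2)}_k)\in\mathbb R^2$; (iii) $\sum_{j=1}^6\big((\Delta-\lambda)\phi_j\big)(\boldsymbol q^{(3)}/R)\,\boldsymbol c_j-\sum_{j=1}^3\nabla\phi_j(\boldsymbol q^{(3)}/R)\,d_j\in\mathbb R^2$; (iv) for $k=1,2,3$: $\sum_{j=1}^6\big(\partial_x\phi_j\,c_j^{(1)}+\partial_y\phi_j\,c_j^{(2)}\big)(\boldsymbol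 q^{(4)}_k/R)\in\mathbb R$ (with a fixed ordering of rows and columns). $\|\cdot\|_\infty$ is the maximum-row-sum matrix norm. These encode collocation of the Dirichlet condition, traction condition, Brinkman momentum equation and divergence-free condition for a local Cauchy problem on $\Gamma\cap\mathcal O$. *)

theory Defs
  imports "HOL-Analysis.Analysis" "Jordan_Normal_Form.Matrix"
begin

definition phi :: "nat \<Rightarrow> real^2 \<Rightarrow> real" where
  "phi j p = (let x = p$1; y = p$2 in
     if j = 1 then 1 else if j = 2 then x else if j = 3 then y
     else if j = 4 then x^2 else if j = 5 then y^2 else x * y)"

definition dphi :: "nat \<Rightarrow> nat \<Rightarrow> real^2 \<Rightarrow> real" where
  "dphi a j p = (let x = p$1; y = p$2 in
     if a = 1 then
       (if j = 1 then 0 else if j = 2 then 1 else if j = 3 then 0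
        else if j = 4 then 2 * x else if j = 5 then 0 else y)
     else
       (if j = 1 then 0 else if j = 2 then 0 else if j = 3 then 1
        else if j = 4 then 0 else if j = 5 then 2 * y else x))"

definition lapphi :: "nat \<Rightarrow> real^2 \<Rightarrow> real" where
  "lapphi j p = (if j = 4 \<or> j = 5 then 2 else 0)"

definition cmp :: "real^2 \<Rightarrow> nat \<Rightarrow> real" where
  "cmp v a = (if a = 1 then v$1 else v$2)"

text \<open>Ordering of unknowns (columns 0..14): column 2(j-1)+(m-1) is c_j^(m) (j=1..6, m=1,2),
  column 11+j is d_j (j=1..3).
  Ordering of equations (rows 0..14): rows 2(k-1)+(a-1) (k=1,2,3) Dirichlet, component a;
  rows 6+2(k-1)+(a-1) (k=1,2) traction, component a; rows 10+(a-1) momentum, component a;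
  rows 12+(k-1) (k=1,2,3) divergence.
  Parameters: X arc-length parametrisation, nn the unit normal as a function of arc length
  (so n(q) at q = X(s) is nn s), lam = lambda, eta1 k / eta2 k (k from 0) the constants
  eta^(1)_{k+1}, eta^(2)_{k+1}, eta3 = eta^(3), xi k = xi_{k+1}.\<close>

definition colloc_entry ::
  "(real \<Rightarrow> real^2) \<Rightarrow> (real \<Rightarrow> real^2) \<Rightarrow> real \<Rightarrow> (nat \<Rightarrow> real) \<Rightarrow> (nat \<Rightarrow> real)
   \<Rightarrow> real \<Rightarrow> (nat \<Rightarrow> real^2) \<Rightarrow> real \<Rightarrow> nat \<Rightarrow> nat \<Rightarrow> real" where
  "colloc_entry X nn lam eta1 eta2 eta3 xi R i j =
    (let jj = j div 2 + 1; m = j mod 2 + 1; dd = j - 11 in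
     if i < 6 then
       (let k = i div 2; a = i mod 2 + 1; p = (1 / R) *\<^sub>R X (eta1 k * R) in
        if j < 12 then (if a = m then phi jj p else 0) else 0)
     else if i < 10 then
       (let k = (i - 6) div 2; a = (i - 6) mod 2 + 1;
            p = (1 / R) *\<^sub>R X (eta2 k * R); nv = nn (eta2 k * R) in
        if j < 12 then
          (if a = m then dphi 1 jj p * nv$1 + dphi 2 jj p * nv$2 else 0) + dphi a jj p * cmp nv m
        else - phi dd p * cmp nv a)
     else if i < 12 then
       (let a = i - 10 + 1; p = (1 / R) *\<^sub>R X (eta3 * R) in
        if j < 12 then (if a = m then lapphi jj p - lam * phi jj p else 0)
        else - dphi a dd p)
     else
       (let k = i - 12; p = (1 / R) *\<^sub>R (R *\<^sub>R xi k) in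
        if j < 12 then dphi m jj p else 0))"

definition colloc_matrix ::
  "(real \<Rightarrow> real^2) \<Rightarrow> (real \<Rightarrow> real^2) \<Rightarrow> real \<Rightarrow> (nat \<Rightarrow> real) \<Rightarrow> (nat \<Rightarrow> real)
   \<Rightarrow> real \<Rightarrow> (nat \<Rightarrow> real^2) \<Rightarrow> real \<Rightarrow> real mat" where
  "colloc_matrix X nn lam eta1 eta2 eta3 xi R =
     mat 15 15 (\<lambda>(i, j). colloc_entry X nn lam eta1 eta2 eta3 xi R i j)"

definition norm_inf_mat :: "real mat \<Rightarrow> real" where
  "norm_inf_mat B = Max ((\<lambda>i. \<Sum>j<dim_col B. \<bar>B $$ (i, j)\<bar>) ` {..<dim_row B})"

end

theory Submission
  imports Defs "Jordan_Normal_Form.Determinant"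
begin

lemma lin2:
  fixes a b x0 x1 :: real
  assumes "x0 \<noteq> x1" "a + x0 * b = 0" "a + x1 * b = 0"
  shows "a = 0 \<and> b = 0"
proof -
  have "(x0 - x1) * b = (a + x0 * b) - (a + x1 * b)" by (simp add: algebra_simps)
  hence "(x0 - x1) * b = 0" using assms by simp
  hence "b = 0" using assms(1) by simp
  thus ?thesis using assms by simp
qed

lemma vdm3:
  fixes a b c x0 x1 x2 :: real
  assumes "x0 \<noteq> x1" "x0 \<noteq> x2" "x1 \<noteq> x2"
    "a + x0 * b + x0^2 * c = 0" "a + x1 * b + x1^2 * c = 0" "a + x2 * b + x2^2 * c = 0"
  shows "a = 0 \<and> b = 0 \<and> c = 0"
proof -
  have "(x0 - x1) * (b + (x0 + x1) * c) = 0" using assms by (simp add: algebra_simps power2_eq_square)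
  hence 1: "b + (x0 + x1) * c = 0" using assms(1) by simp
  have "(x0 - x2) * (b + (x0 + x2) * c) = 0" using assms by (simp add: algebra_simps power2_eq_square)
  hence 2: "b + (x0 + x2) * c = 0" using assms(2) by simp
  have "(x2 - x1) * c = (b + (x0 + x2) * c) - (b + (x0 + x1) * c)" by (simp add: algebra_simps)
  hence "(x2 - x1) * c = 0" using 1 2 by simp
  hence "c = 0" using assms(3) by simp
  thus ?thesis using 1 assms(4) by simp
qed

lemma noncol:
  fixes p0 p1 p2 :: "real^2" and a b c :: real
  assumes nc: "\<not> collinear {p0, p1, p2}"
    and h: "\<forall>p\<in>{p0,p1,p2}. a + b * p$1 + c * p$2 = 0"
  shows "a = 0 \<and> b = 0 \<and> c = 0"
proof (cases "b = 0 \<and> c = 0")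
  case True thus ?thesis using h[rule_format, of p0] by simp
next
  case False
  have "collinear {p0, p1, p2}"
    unfolding collinear_def
  proof (rule exI[of _ "vector [- c, b]"], intro ballI)
    fix x y assume x: "x \<in> {p0,p1,p2}" and y: "y \<in> {p0,p1,p2}"
    have hx: "a + b * x$1 + c * x$2 = 0" using h x by blast
    have hy: "a + b * y$1 + c * y$2 = 0" using h y by blast
    have "b * (x$1 - y$1) + c * (x$2 - y$2) = (a + b * x$1 + c * x$2) - (a + b * y$1 + c * y$2)"
      by (simp add: algebra_simps)
    hence e: "b * (x$1 - y$1) + c * (x$2 - y$2) = 0" using hx hy by simp
    show "\<exists>t. x - y = t *\<^sub>R vector [- c, b]"
    proof (cases "b = 0")
      case True
      hence c: "c \<noteq> 0" using False by simp
      hence "x$2 - y$2 = 0" using e True by simp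
      hence "x - y = (- (x$1 - y$1) / c) *\<^sub>R vector [- c, b]"
        using True c apply (subst Finite_Cartesian_Product.vec_eq_iff) by (simp add: forall_2 vector_2 field_simps)
      thus ?thesis by blast
    next
      case b: False
      have "x$1 - y$1 = - c * ((x$2 - y$2) / b)"
        using e b by (simp add: field_simps)
      hence "x - y = ((x$2 - y$2) / b) *\<^sub>R vector [- c, b]"
        using b unfolding Finite_Cartesian_Product.vec_eq_iff forall_2 by (simp add: vector_2 field_simps)
      thus ?thesis by blast
    qed
  qed
  thus ?thesis using nc by simp
qed

definition G :: "(nat \<Rightarrow> real^2) \<Rightarrow> (nat \<Rightarrow> real^2) \<Rightarrow> (nat \<Rightarrow> real^2) \<Rightarrow> real^2 \<Rightarrow> (nat \<Rightarrow> real^2) \<Rightarrow> real \<Rightarrow> nat \<Rightarrow> nat \<Rightarrow> real" where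
 "G P1 P2 N2 P3 P4 lam i j =
    (let jj = j div 2 + 1; m = j mod 2 + 1; dd = j - 11 in
     if i < 6 then
       (let k = i div 2; a = i mod 2 + 1; p = P1 k in
        if j < 12 then (if a = m then phi jj p else 0) else 0)
     else if i < 10 then
       (let k = (i - 6) div 2; a = (i - 6) mod 2 + 1; p = P2 k; nv = N2 k in
        if j < 12 then
          (if a = m then dphi 1 jj p * nv$1 + dphi 2 jj p * nv$2 else 0) + dphi a jj p * cmp nv m
        else - phi dd p * cmp nv a)
     else if i < 12 then
       (let a = i - 10 + 1; p = P3 in
        if j < 12 then (if a = m then lapphi jj p - lam * phi jj p else 0)
        else - dphi a dd p)
     else
       (let k = i - 12; p = P4 k in
        if j < 12 then dphi m jj p else 0))"

lemma colloc_G: "colloc_entry X nn lam eta1 eta2 eta3 xi R i j =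
  G (\<lambda>k. (1/R) *\<^sub>R X (eta1 k * R)) (\<lambda>k. (1/R) *\<^sub>R X (eta2 k * R)) (\<lambda>k. nn (eta2 k * R))
    ((1/R) *\<^sub>R X (eta3 * R)) (\<lambda>k. (1/R) *\<^sub>R (R *\<^sub>R xi k)) lam i j"
  unfolding colloc_entry_def G_def Let_def ..

lemma sum15: "(\<Sum>j<(15::nat). f j) = f 0 + f 1 + f 2 + f 3 + f 4 + f 5 + f 6 + f 7 + f 8 + f 9 + f 10 + f 11 + f 12 + f 13 + (f 14::real)"
  by (simp add: eval_nat_numeral)

lemma kernel:
  fixes Qa Qb Qn Qd :: "nat \<Rightarrow> real^2" and Qc :: "real^2" and ea :: "nat \<Rightarrow> real"
  assumes Qa: "\<And>k. k < 3 \<Longrightarrow> Qa k $ 1 = ea k \<and> Qa k $ 2 = 0"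
   and e1d: "ea 0 \<noteq> ea 1" "ea 0 \<noteq> ea 2" "ea 1 \<noteq> ea 2"
   and Qb: "\<And>k. k < 2 \<Longrightarrow> Qb k $ 2 = 0" and e2d: "Qb 0 $ 1 \<noteq> Qb 1 $ 1"
   and N: "\<And>k. k < 2 \<Longrightarrow> Qn k $ 1 = 0 \<and> Qn k $ 2 = s" and s: "s \<noteq> 0"
   and Qc: "Qc $ 2 = 0"
   and nc: "\<not> collinear {Qd 0, Qd 1, Qd 2}"
   and eq: "\<And>i. i < 15 \<Longrightarrow> (\<Sum>j<15. G Qa Qb Qn Qc Qd lam i j * w j) = 0"
  shows "\<forall>j<15. w j = 0"
proof -
  have subs: "Qa 0 $ 1 = ea 0" "Qa 0 $ 2 = 0" "Qa (Suc 0) $ 1 = ea (Suc 0)" "Qa (Suc 0) $ 2 = 0"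
    "Qa 2 $ 1 = ea 2" "Qa 2 $ 2 = 0" "Qb 0 $ 2 = 0" "Qb (Suc 0) $ 2 = 0"
    "Qn 0 $ 1 = 0" "Qn 0 $ 2 = s" "Qn (Suc 0) $ 1 = 0" "Qn (Suc 0) $ 2 = s" "Qc $ 2 = 0"
    using Qa[of 0] Qa[of 1] Qa[of 2] Qb[of 0] Qb[of 1] N[of 0] N[of 1] Qc by auto
  note e0 = eq[of 0, unfolded sum15, simplified G_def Let_def phi_def dphi_def lapphi_def cmp_def, simplified, unfolded subs, simplified]
  note ea = eq[of 1, unfolded sum15, simplified G_def Let_def phi_def dphi_def lapphi_def cmp_def, simplified, unfolded subs, simplified]
  note e2 = eq[of 2, unfolded sum15, simplified G_def Let_def phi_def dphi_def lapphi_def cmp_def, simplified, unfolded subs, simplified]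
  note e3 = eq[of 3, unfolded sum15, simplified G_def Let_def phi_def dphi_def lapphi_def cmp_def, simplified, unfolded subs, simplified]
  note e4 = eq[of 4, unfolded sum15, simplified G_def Let_def phi_def dphi_def lapphi_def cmp_def, simplified, unfolded subs, simplified]
  note e5 = eq[of 5, unfolded sum15, simplified G_def Let_def phi_def dphi_def lapphi_def cmp_def, simplified, unfolded subs, simplified]
  note e6 = eq[of 6, unfolded sum15, simplified G_def Let_def phi_def dphi_def lapphi_def cmp_def, simplified, unfolded subs, simplified]
  note e7 = eq[of 7, unfolded sum15, simplified G_def Let_def phi_def dphi_def lapphi_def cmp_def, simplified, unfolded subs, simplified]
  note e8 = eq[of 8, unfolded sum15, simplified G_def Let_def phi_def dphi_def lapphi_def cmp_def, simplified, unfolded subs, simplified]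
  note e9 = eq[of 9, unfolded sum15, simplified G_def Let_def phi_def dphi_def lapphi_def cmp_def, simplified, unfolded subs, simplified]
  note e10 = eq[of 10, unfolded sum15, simplified G_def Let_def phi_def dphi_def lapphi_def cmp_def, simplified, unfolded subs, simplified]
  note e11 = eq[of 11, unfolded sum15, simplified G_def Let_def phi_def dphi_def lapphi_def cmp_def, simplified, unfolded subs, simplified]
  note e12 = eq[of 12, unfolded sum15, simplified G_def Let_def phi_def dphi_def lapphi_def cmp_def, simplified, unfolded subs, simplified]
  note e13 = eq[of 13, unfolded sum15, simplified G_def Let_def phi_def dphi_def lapphi_def cmp_def, simplified, unfolded subs, simplified]
  note e14 = eq[of 14, unfolded sum15, simplified G_def Let_def phi_def dphi_def lapphi_def cmp_def, simplified, unfolded subs, simplified]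
  have d1: "ea 0 \<noteq> ea (Suc 0)" "ea 0 \<noteq> ea 2" "ea (Suc 0) \<noteq> ea 2" using e1d by simp_all
  have A: "w 0 = 0 \<and> w 2 = 0 \<and> w 6 = 0"
    by (rule vdm3[OF d1 e0 e2 e4])
  have B: "w (Suc 0) = 0 \<and> w 3 = 0 \<and> w 7 = 0"
    by (rule vdm3[OF d1 ea e3 e5])
  have "s * (w 4 + Qb 0 $ 1 * w 10) = 0" using e6 B by (simp add: algebra_simps)
  hence c1: "w 4 + Qb 0 $ 1 * w 10 = 0" using s by simp
  have "s * (w 4 + Qb (Suc 0) $ 1 * w 10) = 0" using e8 B by (simp add: algebra_simps)
  hence c2: "w 4 + Qb (Suc 0) $ 1 * w 10 = 0" using s by simp
  have C: "w 4 = 0 \<and> w 10 = 0" using lin2[OF _ c1 c2] e2d by simp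
  have "s * ((2 * w 5 - w 12) + Qb 0 $ 1 * (2 * w 11 - w 13)) = 0" using e7 by (simp add: algebra_simps)
  hence d1: "(2 * w 5 - w 12) + Qb 0 $ 1 * (2 * w 11 - w 13) = 0" using s by simp
  have "s * ((2 * w 5 - w 12) + Qb (Suc 0) $ 1 * (2 * w 11 - w 13)) = 0" using e9 by (simp add: algebra_simps)
  hence d2: "(2 * w 5 - w 12) + Qb (Suc 0) $ 1 * (2 * w 11 - w 13) = 0" using s by simp
  have D: "2 * w 5 - w 12 = 0 \<and> 2 * w 11 - w 13 = 0" using lin2[OF _ d1 d2] e2d by simp
  have "\<forall>p\<in>{Qd 0, Qd 1, Qd 2}. (w 2 + w 5) + (2 * w 6 + w 11) * p$1 + (2 * w 9 + w 10) * p$2 = 0"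
    using e12 e13 e14 by (auto simp: algebra_simps)
  hence E: "w 2 + w 5 = 0 \<and> 2 * w 6 + w 11 = 0 \<and> 2 * w 9 + w 10 = 0" by (rule noncol[OF nc])
  have w5: "w 5 = 0" "w 11 = 0" "w 9 = 0" using A C E by auto
  have w12: "w 12 = 0" "w 13 = 0" using D w5 by auto
  have w8: "w 8 = 0" using e10 A w12 by simp
  have w14: "w 14 = 0" using e11 B w5 by simp
  show ?thesis
  proof (intro allI impI)
    fix j :: nat assume "j < 15"
    hence "j = 0 \<or> j = 1 \<or> j = 2 \<or> j = 3 \<or> j = 4 \<or> j = 5 \<or> j = 6 \<or> j = 7 \<or> j = 8 \<or> j = 9
      \<or> j = 10 \<or> j = 11 \<or> j = 12 \<or> j = 13 \<or> j = 14" by presburger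
    thus "w j = 0" using A B C w5 w12 w8 w14 by auto
  qed
qed

lemma tendsto_if_const:
  "(c \<Longrightarrow> (f \<longlongrightarrow> a) F) \<Longrightarrow> (\<not> c \<Longrightarrow> (g \<longlongrightarrow> b) F) \<Longrightarrow>
   ((\<lambda>x. if c then f x else g x) \<longlongrightarrow> (if c then a else b)) F"
  by (cases c) auto

lemma tendsto_phi: "(f \<longlongrightarrow> l) F \<Longrightarrow> ((\<lambda>x. phi j (f x)) \<longlongrightarrow> phi j l) F"
  unfolding phi_def Let_def by (intro tendsto_if_const tendsto_intros tendsto_vec_nth) auto

lemma tendsto_dphi: "(f \<longlongrightarrow> l) F \<Longrightarrow> ((\<lambda>x. dphi a j (f x)) \<longlongrightarrow> dphi a j l) F"
  unfolding dphi_def Let_def by (intro tendsto_if_const tendsto_intros tendsto_vec_nth) auto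

lemma tendsto_cmp: "(f \<longlongrightarrow> l) F \<Longrightarrow> ((\<lambda>x. cmp (f x) a) \<longlongrightarrow> cmp l a) F"
  unfolding cmp_def by (intro tendsto_if_const tendsto_intros tendsto_vec_nth) auto

lemma tendsto_G:
  assumes "\<And>k. ((\<lambda>x. p1 x k) \<longlongrightarrow> P1 k) F" "\<And>k. ((\<lambda>x. p2 x k) \<longlongrightarrow> P2 k) F"
    "\<And>k. ((\<lambda>x. n2 x k) \<longlongrightarrow> N2 k) F" "(p3 \<longlongrightarrow> P3) F" "\<And>k. ((\<lambda>x. p4 x k) \<longlongrightarrow> P4 k) F"
  shows "((\<lambda>x. G (p1 x) (p2 x) (n2 x) (p3 x) (p4 x) lam i j) \<longlongrightarrow> G P1 P2 N2 P3 P4 lam i j) F"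
  unfolding G_def Let_def lapphi_def
  by (intro tendsto_if_const tendsto_intros tendsto_vec_nth tendsto_phi tendsto_dphi tendsto_cmp assms)

lemma tendsto_det:
  fixes A :: "'b \<Rightarrow> real mat"
  assumes A: "\<And>x. A x \<in> carrier_mat n n" and L: "L \<in> carrier_mat n n"
    and lim: "\<And>i j. i < n \<Longrightarrow> j < n \<Longrightarrow> ((\<lambda>x. A x $$ (i,j)) \<longlongrightarrow> L $$ (i,j)) F"
  shows "((\<lambda>x. Determinant.det (A x)) \<longlongrightarrow> Determinant.det L) F"
proof -
  have "((\<lambda>x. \<Sum>p\<in>{p. p permutes {0..<n}}. signof p * (\<Prod>i=0..<n. A x $$ (i, p i)))
     \<longlongrightarrow> (\<Sum>p\<in>{p. p permutes {0..<n}}. signof p * (\<Prod>i=0..<n. L $$ (i, p i)))) F"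
  proof (intro tendsto_sum tendsto_mult tendsto_const tendsto_prod)
    fix p i assume p: "p \<in> {p. p permutes {0..<n}}" and i: "i \<in> {0..<n}"
    have "p i \<in> {0..<n}" using permutes_in_image[of p "{0..<n}" i] p i by auto
    thus "((\<lambda>x. A x $$ (i, p i)) \<longlongrightarrow> L $$ (i, p i)) F" using i lim by auto
  qed
  thus ?thesis using Determinant.det_def'[OF A] Determinant.det_def'[OF L] by simp
qed

lemma tendsto_adj:
  fixes A :: "'b \<Rightarrow> real mat"
  assumes A: "\<And>x. A x \<in> carrier_mat n n" and L: "L \<in> carrier_mat n n"
    and lim: "\<And>i j. i < n \<Longrightarrow> j < n \<Longrightarrow> ((\<lambda>x. A x $$ (i,j)) \<longlongrightarrow> L $$ (i,j)) F"
    and ij: "i < n" "j < n"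
  shows "((\<lambda>x. adj_mat (A x) $$ (i,j)) \<longlongrightarrow> adj_mat L $$ (i,j)) F"
proof -
  have "((\<lambda>x. Determinant.det (mat_delete (A x) j i)) \<longlongrightarrow> Determinant.det (mat_delete L j i)) F"
  proof (rule tendsto_det[of _ "n - 1"])
    show "\<And>x. mat_delete (A x) j i \<in> carrier_mat (n - 1) (n - 1)" using A mat_delete_carrier by blast
    show "mat_delete L j i \<in> carrier_mat (n - 1) (n - 1)" using L mat_delete_carrier by blast
    fix i' j' assume ij': "i' < n - 1" "j' < n - 1"
    have dims: "\<And>x. dim_row (A x) = n" "\<And>x. dim_col (A x) = n" "dim_row L = n" "dim_col L = n"
      using A L by auto
    let ?r = "if i' < j then i' else Suc i'" and ?c = "if j' < i then j' else Suc j'"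
    have e: "\<And>x. mat_delete (A x) j i $$ (i', j') = A x $$ (?r, ?c)"
      "mat_delete L j i $$ (i', j') = L $$ (?r, ?c)"
      using ij' unfolding mat_delete_def dims by auto
    have "?r < n" "?c < n" using ij' by auto
    thus "((\<lambda>x. mat_delete (A x) j i $$ (i', j')) \<longlongrightarrow> mat_delete L j i $$ (i', j')) F"
      unfolding e by (rule lim)
  qed
  hence "((\<lambda>x. cofactor (A x) j i) \<longlongrightarrow> cofactor L j i) F"
    unfolding cofactor_def by (intro tendsto_intros)
  moreover have "\<And>x. adj_mat (A x) $$ (i,j) = cofactor (A x) j i" "adj_mat L $$ (i,j) = cofactor L j i"
  proof -
    have dims: "\<And>x. dim_row (A x) = n" "\<And>x. dim_col (A x) = n" "dim_row L = n" "dim_col L = n"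
      using A L by auto
    show "\<And>x. adj_mat (A x) $$ (i,j) = cofactor (A x) j i" "adj_mat L $$ (i,j) = cofactor L j i"
      unfolding adj_mat_def dims using ij by auto
  qed
  ultimately show ?thesis by simp
qed

lemma scaled_lim:
  fixes X :: "real \<Rightarrow> real^2"
  assumes "(X has_vector_derivative V) (at 0)" "X 0 = 0"
  shows "((\<lambda>R. (1/R) *\<^sub>R X (e*R)) \<longlongrightarrow> e *\<^sub>R V) (at_right 0)"
proof -
  have d0: "(X has_derivative (\<lambda>h. h *\<^sub>R V)) (at (e*0))"
    using assms(1) by (simp add: has_vector_derivative_def)
  have "((\<lambda>R. X (e*R)) has_derivative (\<lambda>h. (e*h) *\<^sub>R V)) (at 0)"
    using has_derivative_compose[OF has_derivative_mult_right[OF has_derivative_ident, of e] d0]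
    by (simp add: o_def)
  hence "((\<lambda>R. X (e*R)) has_derivative (\<lambda>h. (e*h) *\<^sub>R V)) (at 0 within {0<..})"
    by (rule has_derivative_at_withinI)
  hence "((\<lambda>y. (1 / norm (y - 0)) *\<^sub>R (X (e*y) - (X (e*0) + (e*(y - 0)) *\<^sub>R V))) \<longlongrightarrow> 0) (at_right 0)"
    unfolding has_derivative_within by blast
  hence "((\<lambda>y. (1 / y) *\<^sub>R X (e*y) - e *\<^sub>R V) \<longlongrightarrow> 0) (at_right 0)"
  proof (rule Lim_transform_eventually)
    show "\<forall>\<^sub>F y in at_right 0. (1 / norm (y - 0)) *\<^sub>R (X (e*y) - (X (e*0) + (e*(y - 0)) *\<^sub>R V)) = (1 / y) *\<^sub>R X (e*y) - e *\<^sub>R V"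
      using eventually_at_right_less[of 0]
    proof (rule eventually_mono)
      fix y :: real assume "0 < y"
      thus "(1 / norm (y - 0)) *\<^sub>R (X (e*y) - (X (e*0) + (e*(y - 0)) *\<^sub>R V)) = (1 / y) *\<^sub>R X (e*y) - e *\<^sub>R V"
        using assms(2) by (simp add: algebra_simps)
    qed
  qed
  thus ?thesis using Lim_null by blast
qed

theorem mainTheorem4:
  fixes X X' X'' nn :: "real \<Rightarrow> real^2" and a b lam eta3 :: real
    and eta1 eta2 :: "nat \<Rightarrow> real" and xi :: "nat \<Rightarrow> real^2"
  assumes dom: "a < 0" "0 < b"
    and C2: "\<forall>s\<in>{a<..<b}. (X has_vector_derivative X' s) (at s)
                             \<and> (X' has_vector_derivative X'' s) (at s)"
    and C2cont: "continuous_on {a<..<b} X''"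
    and arclength: "\<forall>s\<in>{a<..<b}. norm (X' s) = 1"
    and X0: "X 0 = 0" and dX0: "X' 0 = vector [1, 0]"
    and normal: "\<forall>s\<in>{a<..<b}. norm (nn s) = 1 \<and> nn s \<bullet> X' s = 0"
    and normal_cont: "continuous_on {a<..<b} nn"
    and lam: "lam \<ge> 0"
    and eta1_distinct: "\<forall>k<3. \<forall>l<3. k \<noteq> l \<longrightarrow> eta1 k \<noteq> eta1 l"
    and eta2_distinct: "eta2 0 \<noteq> eta2 1"
    and xi_noncollinear: "\<not> collinear {xi 0, xi 1, xi 2}"
    and in_O: "\<exists>R1>0. \<forall>R. 0 < R \<and> R \<le> R1 \<longrightarrow>
        (\<forall>k<3. eta1 k * R \<in> {a<..<b} \<and> X (eta1 k * R) \<in> ball 0 R)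
      \<and> (\<forall>k<2. eta2 k * R \<in> {a<..<b} \<and> X (eta2 k * R) \<in> ball 0 R)
      \<and> eta3 * R \<in> {a<..<b} \<and> X (eta3 * R) \<in> ball 0 R
      \<and> (\<forall>k<3. R *\<^sub>R xi k \<in> ball 0 R)"
  shows "\<exists>R0>0. \<exists>C. \<forall>R. 0 < R \<and> R \<le> R0 \<longrightarrow>
           (\<exists>B. B \<in> carrier_mat 15 15
              \<and> colloc_matrix X nn lam eta1 eta2 eta3 xi R * B = 1\<^sub>m 15
              \<and> B * colloc_matrix X nn lam eta1 eta2 eta3 xi R = 1\<^sub>m 15
              \<and> norm_inf_mat B \<le> C)"
proof -
  have ab: "0 \<in> {a<..<b}" using dom by simp
  have dX: "(X has_vector_derivative X' 0) (at 0)" using C2 ab by blast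
  define P1 where "P1 = (\<lambda>k. eta1 k *\<^sub>R X' 0)"
  define P2 where "P2 = (\<lambda>k. eta2 k *\<^sub>R X' 0)"
  define N0 where "N0 = (\<lambda>k::nat. nn 0)"
  define P3 where "P3 = eta3 *\<^sub>R X' 0"
  define M where "M = (\<lambda>R. colloc_matrix X nn lam eta1 eta2 eta3 xi R)"
  define M0 where "M0 = mat 15 15 (\<lambda>(i,j). G P1 P2 N0 P3 xi lam i j)"
  have Mc: "\<And>R. M R \<in> carrier_mat 15 15" by (simp add: M_def colloc_matrix_def)
  have M0c: "M0 \<in> carrier_mat 15 15" by (simp add: M0_def)
  have isc: "isCont nn 0" using normal_cont ab continuous_on_eq_continuous_at[of "{a<..<b}" nn] by auto
  have lim: "((\<lambda>R. M R $$ (i,j)) \<longlongrightarrow> M0 $$ (i,j)) (at_right 0)" if ij: "i < 15" "j < 15" for i j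
  proof -
    have e: "\<And>R. M R $$ (i,j) = G (\<lambda>k. (1/R) *\<^sub>R X (eta1 k * R)) (\<lambda>k. (1/R) *\<^sub>R X (eta2 k * R)) (\<lambda>k. nn (eta2 k * R))
    ((1/R) *\<^sub>R X (eta3 * R)) (\<lambda>k. (1/R) *\<^sub>R (R *\<^sub>R xi k)) lam i j"
      using ij by (simp add: M_def colloc_matrix_def colloc_G)
    have e0: "M0 $$ (i,j) = G P1 P2 N0 P3 xi lam i j" using ij by (simp add: M0_def)
    show ?thesis unfolding e e0
    proof (rule tendsto_G)
      fix k
      show "((\<lambda>R. (1/R) *\<^sub>R X (eta1 k * R)) \<longlongrightarrow> P1 k) (at_right 0)"
        unfolding P1_def using scaled_lim[OF dX X0, of "eta1 k"] by (simp add: mult.commute)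
      show "((\<lambda>R. (1/R) *\<^sub>R X (eta2 k * R)) \<longlongrightarrow> P2 k) (at_right 0)"
        unfolding P2_def using scaled_lim[OF dX X0, of "eta2 k"] by (simp add: mult.commute)
      show "((\<lambda>R. (1/R) *\<^sub>R X (eta3 * R)) \<longlongrightarrow> P3) (at_right 0)"
        unfolding P3_def using scaled_lim[OF dX X0, of "eta3"] by (simp add: mult.commute)
      have "((\<lambda>R. eta2 k * R) \<longlongrightarrow> eta2 k * 0) (at_right 0)" by (intro tendsto_intros)
      hence "((\<lambda>R. eta2 k * R) \<longlongrightarrow> 0) (at_right 0)" by simp
      thus "((\<lambda>R. nn (eta2 k * R)) \<longlongrightarrow> N0 k) (at_right 0)"
        unfolding N0_def by (rule isCont_tendsto_compose[OF isc])
      show "((\<lambda>R. (1/R) *\<^sub>R (R *\<^sub>R xi k)) \<longlongrightarrow> xi k) (at_right 0)"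
      proof (rule Lim_transform_eventually[OF tendsto_const])
        show "\<forall>\<^sub>F R in at_right 0. xi k = (1/R) *\<^sub>R (R *\<^sub>R xi k)"
          using eventually_at_right_less[of "0::real"] by (rule eventually_mono) simp
      qed
    qed
  qed
  have nn0: "nn 0 $ 1 = 0"
  proof -
    have "nn 0 \<bullet> X' 0 = 0" using normal ab by blast
    thus ?thesis unfolding dX0 by (simp add: inner_vec_def sum_2 vector_2)
  qed
  have s: "nn 0 $ 2 \<noteq> 0"
  proof
    assume "nn 0 $ 2 = 0"
    hence "nn 0 = 0" using nn0 by (simp add: Finite_Cartesian_Product.vec_eq_iff forall_2)
    moreover have "norm (nn 0) = 1" using normal ab by blast
    ultimately show False by simp
  qed
  have dM0: "Determinant.det M0 \<noteq> 0"
  proof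
    assume "Determinant.det M0 = 0"
    then obtain v where v: "v \<in> carrier_vec 15" "v \<noteq> 0\<^sub>v 15" "M0 *\<^sub>v v = 0\<^sub>v 15"
      using det_0_iff_vec_prod_zero[OF M0c] by blast
    have "\<forall>j<15. v $ j = 0"
    proof (rule kernel[where Qa=P1 and Qb=P2 and Qn=N0 and Qc=P3 and Qd=xi and ea=eta1 and s="nn 0 $ 2" and lam=lam and w="\<lambda>j. v $ j"])
      show "\<And>k. k < 3 \<Longrightarrow> P1 k $ 1 = eta1 k \<and> P1 k $ 2 = 0" unfolding P1_def dX0 by (simp add: vector_2)
      show "eta1 0 \<noteq> eta1 1" "eta1 0 \<noteq> eta1 2" "eta1 1 \<noteq> eta1 2" using eta1_distinct by auto
      show "\<And>k. k < 2 \<Longrightarrow> P2 k $ 2 = 0" unfolding P2_def dX0 by (simp add: vector_2)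
      show "P2 0 $ 1 \<noteq> P2 1 $ 1" unfolding P2_def dX0 using eta2_distinct by (simp add: vector_2)
      show "\<And>k. k < 2 \<Longrightarrow> N0 k $ 1 = 0 \<and> N0 k $ 2 = nn 0 $ 2" unfolding N0_def using nn0 by simp
      show "nn 0 $ 2 \<noteq> 0" by (rule s)
      show "P3 $ 2 = 0" unfolding P3_def dX0 by (simp add: vector_2)
      show "\<not> collinear {xi 0, xi 1, xi 2}" by (rule xi_noncollinear)
      fix i :: nat assume i: "i < 15"
      have "(M0 *\<^sub>v v) $ i = 0" using v i by simp
      hence "row M0 i \<bullet> v = 0" using i M0c by simp
      thus "(\<Sum>j<15. G P1 P2 N0 P3 xi lam i j * v $ j) = 0"
        using i v(1) by (simp add: scalar_prod_def M0_def atLeast0LessThan)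
    qed
    hence "v = 0\<^sub>v 15" using v(1) by (intro eq_vecI) auto
    with v(2) show False by simp
  qed
  have ldet: "((\<lambda>R. Determinant.det (M R)) \<longlongrightarrow> Determinant.det M0) (at_right 0)"
    by (rule tendsto_det[OF Mc M0c lim])
  define B where "B = (\<lambda>R. (1 / Determinant.det (M R)) \<cdot>\<^sub>m adj_mat (M R))"
  define B0 where "B0 = (1 / Determinant.det M0) \<cdot>\<^sub>m adj_mat M0"
  have ev_det: "\<forall>\<^sub>F R in at_right 0. Determinant.det (M R) \<noteq> 0"
    by (rule tendsto_imp_eventually_ne[OF ldet dM0])
  have limB: "((\<lambda>R. B R $$ (i,j)) \<longlongrightarrow> B0 $$ (i,j)) (at_right 0)" if ij: "i < 15" "j < 15" for i j
  proof -
    have e: "B R $$ (i,j) = (1 / Determinant.det (M R)) * adj_mat (M R) $$ (i,j)" for R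
    proof -
      have "adj_mat (M R) \<in> carrier_mat 15 15" by (rule adj_mat(1)[OF Mc])
      thus ?thesis using ij unfolding B_def by simp
    qed
    have e0: "B0 $$ (i,j) = (1 / Determinant.det M0) * adj_mat M0 $$ (i,j)"
      using ij adj_mat(1)[OF M0c] unfolding B0_def by auto
    show ?thesis unfolding e e0
      by (intro tendsto_mult tendsto_divide tendsto_const ldet dM0 tendsto_adj[OF Mc M0c lim ij])
  qed
  have evB1: "\<forall>\<^sub>F R in at_right 0. \<bar>B R $$ (i,j)\<bar> \<le> \<bar>B0 $$ (i,j)\<bar> + 1" if ij: "i < 15" "j < 15" for i j
    using tendstoD[OF limB[OF ij], of 1]
    by (rule eventually_mono) (auto simp: dist_real_def)
  have evB: "\<forall>\<^sub>F R in at_right 0. \<forall>i\<in>{..<15}. \<forall>j\<in>{..<15}. \<bar>B R $$ (i,j)\<bar> \<le> \<bar>B0 $$ (i,j)\<bar> + 1"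
    by (intro eventually_ball_finite ballI finite_lessThan) (auto intro: evB1)
  define C where "C = (\<Sum>i<15. \<Sum>j<15. \<bar>B0 $$ (i,j)\<bar> + (1::real))"
  have "\<forall>\<^sub>F R in at_right 0. Determinant.det (M R) \<noteq> 0 \<and>
     (\<forall>i\<in>{..<15}. \<forall>j\<in>{..<15}. \<bar>B R $$ (i,j)\<bar> \<le> \<bar>B0 $$ (i,j)\<bar> + 1)"
    using ev_det evB by (rule eventually_conj)
  then obtain b0 :: real where b0: "b0 > 0" and hb: "\<And>R. R > 0 \<Longrightarrow> R < b0 \<Longrightarrow> Determinant.det (M R) \<noteq> 0 \<and>
     (\<forall>i\<in>{..<15}. \<forall>j\<in>{..<15}. \<bar>B R $$ (i,j)\<bar> \<le> \<bar>B0 $$ (i,j)\<bar> + 1)"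
    unfolding eventually_at_right_field by auto
  show ?thesis
  proof (rule exI[of _ "b0/2"], intro conjI exI[of _ C] allI impI)
    show "0 < b0 / 2" using b0 by simp
    fix R :: real assume R: "0 < R \<and> R \<le> b0 / 2"
    hence hR: "Determinant.det (M R) \<noteq> 0" "\<And>i j. i < 15 \<Longrightarrow> j < 15 \<Longrightarrow> \<bar>B R $$ (i,j)\<bar> \<le> \<bar>B0 $$ (i,j)\<bar> + 1"
      using hb[of R] b0 by auto
    have adjc: "adj_mat (M R) \<in> carrier_mat 15 15" by (rule adj_mat(1)[OF Mc])
    have Bc: "B R \<in> carrier_mat 15 15" unfolding B_def using adjc by simp
    have one: "(1 / Determinant.det (M R)) \<cdot>\<^sub>m (Determinant.det (M R) \<cdot>\<^sub>m 1\<^sub>m 15) = (1\<^sub>m 15 :: real mat)"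
      using hR(1) by (intro eq_matI) auto
    have r1: "M R * B R = 1\<^sub>m 15"
      unfolding B_def mult_smult_distrib[OF Mc adjc] adj_mat(2)[OF Mc] using one .
    have r2: "B R * M R = 1\<^sub>m 15"
      unfolding B_def mult_smult_assoc_mat[OF adjc Mc] adj_mat(3)[OF Mc] using one .
    have nb: "norm_inf_mat (B R) \<le> C"
    proof -
      have dims: "dim_row (B R) = 15" "dim_col (B R) = 15" using Bc by auto
      have row: "(\<Sum>j<15. \<bar>B R $$ (i, j)\<bar>) \<le> C" if i: "i < 15" for i
      proof -
        have "(\<Sum>j<15. \<bar>B R $$ (i, j)\<bar>) \<le> (\<Sum>j<15. \<bar>B0 $$ (i,j)\<bar> + 1)"
          by (rule sum_mono) (use hR(2) i in auto)
        also have "\<dots> \<le> C" unfolding C_def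
          by (rule member_le_sum[where f="\<lambda>i. \<Sum>j<15. \<bar>B0 $$ (i,j)\<bar> + (1::real)"])
             (use i in \<open>auto intro: sum_nonneg\<close>)
        finally show ?thesis .
      qed
      show ?thesis unfolding norm_inf_mat_def dims
        by (subst Max_le_iff) (auto intro: row simp: lessThan_empty_iff)
    qed
    show "\<exists>B'. B' \<in> carrier_mat 15 15 \<and> colloc_matrix X nn lam eta1 eta2 eta3 xi R * B' = 1\<^sub>m 15
              \<and> B' * colloc_matrix X nn lam eta1 eta2 eta3 xi R = 1\<^sub>m 15 \<and> norm_inf_mat B' \<le> C"
      using Bc r1 r2 nb unfolding M_def by blast
  qed
qed
end
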